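(* Let $k$ be the quadratic eigenvalue multiplicity of the QCQP data. If $\mathcal F$ is a semidefinite face of $\Gamma$, then $\dim(\mathcal V(\mathcal F))\ge k$.
   Context: Let $N\ge1$, $m_I,m_E\ge0$, $m=m_I+m_E\ge1$, and $A_0,\dots,A_m\in\mathbb S^N$. The quadratic eigenvalue multiplicity is the largest positive integer $k$ (necessarily dividing $N$; write $N=nk$) such that for every $i\in\{0,\dots,m\}$ there exists $\mathcal A_i\in\mathbb S^n$ with $A_i=I_k\otimes\mathcal A_i$ (Kronecker product). For $\gamma\in\mathbb R^m$, $A(\gamma)=A_0+\sum_{i=1}^m\gamma_iA_i$; $\Gamma:=\{\gamma\in\mathbb R^m: A(\gamma)\succeq 0,\ \gamma_i\ge 0\ \forall i\in\{1,\dots,m_I\}\}$. A nonempty face $\mathcal F$ of $\Gamma$ is semidefinite if no $\gamma\in\mathcal F$ has $A(\gamma)\succ0$; $\mathcal V(\mathcal F):=\{v\in\mathbb R^N: A(\gamma)v=0\ \forall\gamma\in\mathcal F\}$. *)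

theory Defs
  imports "HOL-Analysis.Analysis"
begin

text \<open>Coordinates of R^N are indexed by a finite linearly ordered type 'n;
  the position (0-based) of an index in the standard order is idx.\<close>
definition idx :: "'a::{finite,linorder} \<Rightarrow> nat" where
  "idx i = card {j. j < i}"

definition sym_mat :: "((real, 'n::finite) vec, 'n) vec \<Rightarrow> bool" where
  "sym_mat M \<longleftrightarrow> transpose M = M"

definition psd :: "((real, 'n::finite) vec, 'n) vec \<Rightarrow> bool" where
  "psd M \<longleftrightarrow> (\<forall>x. x \<bullet> (M *v x) \<ge> 0)"

definition pd :: "((real, 'n::finite) vec, 'n) vec \<Rightarrow> bool" where
  "pd M \<longleftrightarrow> (\<forall>x. x \<noteq> 0 \<longrightarrow> x \<bullet> (M *v x) > 0)"

text \<open>M = I_k \<otimes> \<A> for some symmetric n x n matrix \<A>, where N = n k.\<close>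
definition is_kron_id :: "nat \<Rightarrow> ((real, 'n::{finite,linorder}) vec, 'n) vec \<Rightarrow> bool" where
  "is_kron_id k M \<longleftrightarrow> 0 < k \<and> k dvd CARD('n) \<and>
     (let n = CARD('n) div k in
      \<exists>\<A> :: nat \<Rightarrow> nat \<Rightarrow> real.
        (\<forall>a<n. \<forall>b<n. \<A> a b = \<A> b a) \<and>
        (\<forall>i j. M $ i $ j =
           (if idx i div n = idx j div n then \<A> (idx i mod n) (idx j mod n) else 0)))"

definition qe_mult :: "((real, 'n::{finite,linorder}) vec, 'n) vec \<Rightarrow> ('m \<Rightarrow> ((real, 'n) vec, 'n) vec) \<Rightarrow> nat" where
  "qe_mult A0 A = (GREATEST k. is_kron_id k A0 \<and> (\<forall>i. is_kron_id k (A i)))"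

definition Amat :: "((real, 'n::finite) vec, 'n) vec \<Rightarrow> ('m::finite \<Rightarrow> ((real, 'n) vec, 'n) vec) \<Rightarrow> (real, 'm) vec \<Rightarrow> ((real, 'n) vec, 'n) vec" where
  "Amat A0 A \<gamma> = A0 + (\<Sum>i\<in>UNIV. (\<gamma> $ i) *\<^sub>R A i)"

text \<open>Feasible set \<Gamma>; the inequality-constrained indices are the first mI ones.\<close>
definition Gamma_set :: "nat \<Rightarrow> ((real, 'n::finite) vec, 'n) vec \<Rightarrow> ('m::{finite,linorder} \<Rightarrow> ((real, 'n) vec, 'n) vec) \<Rightarrow> (real, 'm) vec set" where
  "Gamma_set mI A0 A = {\<gamma>. psd (Amat A0 A \<gamma>) \<and> (\<forall>i. idx i < mI \<longrightarrow> \<gamma> $ i \<ge> 0)}"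

definition semidef_face :: "nat \<Rightarrow> ((real, 'n::finite) vec, 'n) vec \<Rightarrow> ('m::{finite,linorder} \<Rightarrow> ((real, 'n) vec, 'n) vec) \<Rightarrow> (real, 'm) vec set \<Rightarrow> bool" where
  "semidef_face mI A0 A F \<longleftrightarrow> F face_of Gamma_set mI A0 A \<and> F \<noteq> {} \<and>
     \<not> (\<exists>\<gamma>\<in>F. pd (Amat A0 A \<gamma>))"

definition Vspace :: "((real, 'n::finite) vec, 'n) vec \<Rightarrow> ('m::finite \<Rightarrow> ((real, 'n) vec, 'n) vec) \<Rightarrow> (real, 'm) vec set \<Rightarrow> (real, 'n) vec set" where
  "Vspace A0 A F = {v. \<forall>\<gamma>\<in>F. Amat A0 A \<gamma> *v v = 0}"

end

theory Submission
  imports Defs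
begin


lemma sym_entry: "sym_mat M \<Longrightarrow> M $ i $ j = M $ j $ i"
  unfolding sym_mat_def transpose_def by (metis vec_lambda_beta)

lemma sym_dot:
  assumes "sym_mat (M::((real, 'n::finite) vec, 'n) vec)"
  shows "x \<bullet> (M *v y) = y \<bullet> (M *v x)"
proof -
  have "x \<bullet> (M *v y) = (\<Sum>i\<in>UNIV. \<Sum>j\<in>UNIV. x$i * M$i$j * y$j)"
    by (simp add: inner_vec_def matrix_vector_mult_def sum_distrib_left mult.assoc)
  also have "\<dots> = (\<Sum>j\<in>UNIV. \<Sum>i\<in>UNIV. x$i * M$i$j * y$j)" by (rule sum.swap)
  also have "\<dots> = y \<bullet> (M *v x)"
    by (simp add: inner_vec_def matrix_vector_mult_def sum_distrib_left sym_entry[OF assms] mult_ac)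
  finally show ?thesis .
qed

lemma psd_ker:
  assumes S: "sym_mat (M::((real, 'n::finite) vec, 'n) vec)" and P: "psd M"
    and z: "x \<bullet> (M *v x) = 0"
  shows "M *v x = 0"
proof (rule ccontr)
  assume ne: "M *v x \<noteq> 0"
  define y where "y = M *v x"
  define a where "a = y \<bullet> y"
  define b where "b = y \<bullet> (M *v y)"
  have a: "a > 0" using ne by (simp add: a_def y_def)
  have b: "b \<ge> 0" using P by (simp add: psd_def b_def)
  define t where "t = a / (b + 1)"
  have t: "t > 0" using a b by (simp add: t_def)
  have "(x - t *\<^sub>R y) \<bullet> (M *v (x - t *\<^sub>R y)) = x \<bullet> (M *v x) - t * (x \<bullet> (M *v y)) - t * (y \<bullet> (M *v x)) + t*t*b"
    by (simp add: algebra_simps inner_diff_left inner_diff_right b_def)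
  also have "\<dots> = t * (t * b - 2 * a)"
    using sym_dot[OF S, of x y] z by (simp add: a_def y_def algebra_simps)
  finally have e: "(x - t *\<^sub>R y) \<bullet> (M *v (x - t *\<^sub>R y)) = t * (t * b - 2 * a)" .
  have "t * b < a"
  proof -
    have "t * b = a * (b / (b+1))" by (simp add: t_def)
    also have "\<dots> < a * 1" using a b by (intro mult_strict_left_mono) auto
    finally show ?thesis by simp
  qed
  hence "t * (t * b - 2 * a) < 0" using t a by (simp add: mult_pos_neg)
  with e P show False unfolding psd_def by (metis not_le)
qed



lemma idx_lt: "idx (i::'a::{finite,linorder}) < CARD('a)"
proof -
  have "{j. j < i} \<subset> UNIV" by auto
  thus ?thesis unfolding idx_def by (simp add: psubset_card_mono)
qed

lemma idx_mono: "(i::'a::{finite,linorder}) < i' \<Longrightarrow> idx i < idx i'"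
proof -
  assume "i < i'"
  hence "{j. j < i} \<subset> {j. j < i'}" by auto
  thus ?thesis unfolding idx_def by (simp add: psubset_card_mono)
qed

lemma idx_inj: "inj (idx :: 'a::{finite,linorder} \<Rightarrow> nat)"
  by (metis idx_mono injI less_irrefl linorder_neqE)

lemma idx_bij: "bij_betw (idx :: 'a::{finite,linorder} \<Rightarrow> nat) UNIV {..<CARD('a)}"
proof -
  have "idx ` (UNIV::'a set) \<subseteq> {..<CARD('a)}" using idx_lt by auto
  moreover have "card (idx ` (UNIV::'a set)) = CARD('a)" using idx_inj card_image by blast
  ultimately have "idx ` (UNIV::'a set) = {..<CARD('a)}"
    by (metis card_lessThan card_subset_eq finite_lessThan)
  thus ?thesis using idx_inj by (simp add: bij_betw_def)
qed

lemma sum_idx: "(\<Sum>j\<in>(UNIV::'a::{finite,linorder} set). f (idx j)) = (\<Sum>q<CARD('a). f q)"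
  using sum.reindex_bij_betw[OF idx_bij] by blast

definition ipos :: "nat \<Rightarrow> 'a::{finite,linorder}" where "ipos = inv idx"

lemma pos_idx[simp]: "ipos (idx i) = i"
  by (simp add: ipos_def idx_inj)

lemma idx_pos[simp]: "p < CARD('a) \<Longrightarrow> idx (ipos p :: 'a::{finite,linorder}) = p"
  unfolding ipos_def by (metis bij_betw_inv_into_right idx_bij lessThan_iff)

lemma block_sum:
  assumes "c < k" "(n::nat) > 0"
  shows "(\<Sum>q<k*n. if q div n = c then h q else 0) = (\<Sum>r<n. h (c*n + r))"
proof -
  have "(\<Sum>q<k*n. if q div n = c then h q else 0) = sum h {q\<in>{..<k*n}. q div n = c}"
    by (simp add: sum.inter_filter[symmetric])
  also have "{q\<in>{..<k*n}. q div n = c} = {0 + c*n..<n + c*n}"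
  proof -
    have "c*n + n \<le> k*n" using assms by (metis add.commute mult_Suc less_eq_Suc_le mult_le_mono1)
    show ?thesis
    proof (intro set_eqI iffI)
      fix q assume "q \<in> {q\<in>{..<k*n}. q div n = c}"
      hence "q div n = c" by simp
      thus "q \<in> {0 + c*n..<n + c*n}"
        by (metis add.commute add_0 atLeastLessThan_iff div_mult_mod_eq mod_less_divisor assms(2) add_less_cancel_left le_add2 mult.commute)
    next
      fix q assume q: "q \<in> {0 + c*n..<n + c*n}"
      hence "q div n = c" using assms(2) by (auto intro: div_nat_eqI simp: algebra_simps)
      moreover have "q < k*n" using q \<open>c*n + n \<le> k*n\<close> by auto
      ultimately show "q \<in> {q\<in>{..<k*n}. q div n = c}" by simp
    qed
  qed
  also have "sum h \<dots> = (\<Sum>r\<in>{0..<n}. h (r + c*n))" by (rule sum.shift_bounds_nat_ivl)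
  finally show ?thesis by (simp add: atLeast0LessThan add.commute)
qed



lemma kron_le: "is_kron_id k (M::((real, 'n::{finite,linorder}) vec, 'n) vec) \<Longrightarrow> k \<le> CARD('n)"
  unfolding is_kron_id_def by (simp add: dvd_imp_le)

lemma kron_1: "sym_mat (M::((real, 'n::{finite,linorder}) vec, 'n) vec) \<Longrightarrow> is_kron_id 1 M"
  unfolding is_kron_id_def Let_def
  apply (rule conjI, simp, rule conjI, simp)
  apply (rule exI[where x="\<lambda>a b. M $ ipos a $ ipos b"])
proof (intro allI conjI impI)
  fix i j :: 'n
  have "idx i < CARD('n)" "idx j < CARD('n)" by (rule idx_lt)+
  thus "M $ i $ j = (if idx i div (CARD('n) div 1) = idx j div (CARD('n) div 1) then M $ ipos (idx i mod (CARD('n) div 1)) $ ipos (idx j mod (CARD('n) div 1)) else 0)"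
    by simp
qed (auto simp: sym_entry)

lemma qe_prop:
  assumes "sym_mat A0" "\<And>i. sym_mat (A i)"
  shows "is_kron_id (qe_mult A0 A) (A0::((real, 'n::{finite,linorder}) vec, 'n) vec) \<and> (\<forall>i. is_kron_id (qe_mult A0 A) (A i))"
  unfolding qe_mult_def
  apply (rule GreatestI_nat[where k=1 and b="CARD('n)"])
  using assms kron_1 kron_le by blast+

lemma Amat_comp: "Amat A0 A \<gamma> $ i $ j = A0 $ i $ j + (\<Sum>m\<in>UNIV. \<gamma> $ m * A m $ i $ j)"
  by (simp add: Amat_def)

lemma Amat_sym: "sym_mat A0 \<Longrightarrow> (\<And>i. sym_mat (A i)) \<Longrightarrow> sym_mat (Amat A0 A \<gamma>)"
  unfolding sym_mat_def[of "Amat A0 A \<gamma>"] transpose_def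
  by (simp add: vec_eq_iff Amat_comp sym_entry)

lemma Amat_block:
  fixes A0 :: "((real, 'n::{finite,linorder}) vec, 'n) vec"
    and A :: "'m::finite \<Rightarrow> ((real, 'n) vec, 'n) vec"
  assumes "is_kron_id k A0" "\<forall>i. is_kron_id k (A i)"
  shows "\<exists>B. \<forall>i j. Amat A0 A \<gamma> $ i $ j =
    (if idx i div (CARD('n) div k) = idx j div (CARD('n) div k) then B (idx i mod (CARD('n) div k)) (idx j mod (CARD('n) div k)) else (0::real))"
    (is "\<exists>B. ?P B")
proof -
  let ?n = "CARD('n) div k"
  obtain B0 where B0: "\<forall>i j. A0 $ i $ j = (if idx i div ?n = idx j div ?n then B0 (idx i mod ?n) (idx j mod ?n) else 0)"
    using assms(1) unfolding is_kron_id_def Let_def by blast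
  have "\<forall>m. \<exists>Bm. \<forall>i j. A m $ i $ j = (if idx i div ?n = idx j div ?n then Bm (idx i mod ?n) (idx j mod ?n) else 0)"
    using assms(2) unfolding is_kron_id_def Let_def by blast
  then obtain Bf where Bf: "\<And>m. \<forall>i j. A m $ i $ j = (if idx i div ?n = idx j div ?n then Bf m (idx i mod ?n) (idx j mod ?n) else 0)"
    by metis
  show ?thesis
    by (rule exI[where x="\<lambda>a b. B0 a b + (\<Sum>m\<in>UNIV. \<gamma> $ m * Bf m a b)"]) (simp add: Amat_comp B0 Bf)
qed

lemma Amat_mid: "Amat A0 A ((1/2) *\<^sub>R g + (1/2) *\<^sub>R h) = (1/2) *\<^sub>R Amat A0 A g + (1/2) *\<^sub>R Amat A0 A h"
  by (simp add: vec_eq_iff Amat_comp sum.distrib sum_distrib_left algebra_simps)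



lemma block_kernel:
  fixes M :: "((real,'n::{finite,linorder}) vec,'n) vec" and V :: "(real,'n) vec set"
  assumes k: "0 < k" "k dvd CARD('n)"
    and MB: "\<forall>i j. M$i$j = (if idx i div (CARD('n) div k) = idx j div (CARD('n) div k)
              then B (idx i mod (CARD('n) div k)) (idx j mod (CARD('n) div k)) else 0)"
    and Mx: "M *v x = 0" and x0: "x \<noteq> 0" and KV: "{v. M *v v = 0} \<subseteq> V"
  shows "k \<le> dim V"
proof -
  define n where "n = CARD('n) div k"
  have N: "CARD('n) = k * n" using k by (simp add: n_def)
  have n0: "n > 0" using N by (metis mult_0_right zero_less_card_finite gr0I)
  have MB': "\<And>i j. M$i$j = (if idx i div n = idx j div n then B (idx i mod n) (idx j mod n) else 0)"
    using MB n_def by simp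
  have mv: "(M *v y)$i = (\<Sum>q<k*n. (if idx i div n = q div n then B (idx i mod n) (q mod n) else 0) * y$(ipos q))" for y i
  proof -
    have "(M *v y)$i = (\<Sum>j\<in>(UNIV::'n set). (if idx i div n = idx j div n then B (idx i mod n) (idx j mod n) else 0) * y$(ipos (idx j)))"
      by (simp add: matrix_vector_mult_def MB')
    also have "\<dots> = (\<Sum>q<CARD('n). (if idx i div n = q div n then B (idx i mod n) (q mod n) else 0) * y$(ipos q))"
      by (rule sum_idx)
    finally show ?thesis using N by simp
  qed
  have lt: "c*n + r < k*n" if "c < k" "r < n" for c r
  proof -
    have "Suc c * n \<le> k*n" using that by (intro mult_le_mono1) simp
    thus ?thesis using that by simp
  qed
  have kerB: "(\<Sum>r<n. B s r * x$(ipos(b*n+r))) = 0" if b: "b < k" and s: "s < n" for b s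
  proof -
    define p where "p = b*n+s"
    have pN: "p < k*n" using lt[OF b s] p_def by simp
    have ip: "idx (ipos p :: 'n) = p" using pN N by simp
    have pd: "p div n = b" "p mod n = s" using s n0 by (simp_all add: p_def)
    have "0 = (M *v x)$(ipos p)" using Mx by simp
    also have "\<dots> = (\<Sum>q<k*n. if q div n = b then B s (q mod n) * x$(ipos q) else 0)"
      unfolding mv ip pd by (intro sum.cong) auto
    also have "\<dots> = (\<Sum>r<n. B s ((b*n+r) mod n) * x$(ipos(b*n+r)))"
      by (rule block_sum[OF b n0])
    also have "\<dots> = (\<Sum>r<n. B s r * x$(ipos(b*n+r)))"
      by (intro sum.cong) auto
    finally show ?thesis by simp
  qed
  obtain j where xj: "x$j \<noteq> 0" using x0 by (metis vec_eq_iff zero_index)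
  define b0 where "b0 = idx j div n"
  define r0 where "r0 = idx j mod n"
  have b0k: "b0 < k" unfolding b0_def using idx_lt[of j] N by (metis less_mult_imp_div_less)
  have r0n: "r0 < n" using n0 by (simp add: r0_def)
  define u where "u r = x$(ipos(b0*n+r))" for r
  have ur0: "u r0 \<noteq> 0" using xj by (simp add: u_def b0_def r0_def mult.commute)
  define w :: "nat \<Rightarrow> (real,'n) vec" where "w c = (\<chi> i. if idx i div n = c then u (idx i mod n) else 0)" for c
  have wker: "M *v w c = 0" if c: "c < k" for c
  proof (subst vec_eq_iff, rule allI)
    fix i :: 'n
    define s where "s = idx i mod n"
    have sn: "s < n" using n0 by (simp add: s_def)
    have wq: "w c $ ipos q = (if q div n = c then u (q mod n) else 0)" if "q < k*n" for q
      using that N by (simp add: w_def)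
    have "(M *v w c)$i = (\<Sum>q<k*n. (if idx i div n = q div n then B s (q mod n) else 0) * (if q div n = c then u (q mod n) else 0))"
      unfolding mv s_def by (intro sum.cong) (auto simp: wq)
    also have "\<dots> = 0"
    proof (cases "idx i div n = c")
      case True
      have "(\<Sum>q<k*n. (if idx i div n = q div n then B s (q mod n) else 0) * (if q div n = c then u (q mod n) else 0))
          = (\<Sum>q<k*n. if q div n = c then B s (q mod n) * u (q mod n) else 0)"
        using True by (intro sum.cong) auto
      also have "\<dots> = (\<Sum>r<n. B s ((c*n+r) mod n) * u ((c*n+r) mod n))" by (rule block_sum[OF c n0])
      also have "\<dots> = (\<Sum>r<n. B s r * x$(ipos(b0*n+r)))" by (intro sum.cong) (auto simp: u_def)
      also have "\<dots> = 0" by (rule kerB[OF b0k sn])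
      finally show ?thesis .
    next
      case False
      thus ?thesis by (intro sum.neutral) auto
    qed
    finally show "(M *v w c)$i = 0$i" by simp
  qed
  have wnz: "w c $ ipos (c*n+r0) \<noteq> 0" if "c < k" for c
    using lt[OF that r0n] N n0 r0n ur0 by (simp add: w_def)
  have orth: "w c \<bullet> w d = 0" if "c \<noteq> d" for c d
    unfolding inner_vec_def using that by (intro sum.neutral) (auto simp: w_def)
  have inj: "inj_on w {..<k}"
  proof (rule inj_onI)
    fix c d assume c: "c \<in> {..<k}" and "d \<in> {..<k}" and e: "w c = w d"
    show "c = d"
    proof (rule ccontr)
      assume "c \<noteq> d"
      hence "w c \<bullet> w c = 0" using orth e by metis
      hence "w c = 0" by simp
      thus False using wnz[of c] c by simp
    qed
  qed
  have ind: "independent (w ` {..<k})"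
  proof (rule pairwise_orthogonal_independent)
    show "pairwise orthogonal (w ` {..<k})"
      unfolding pairwise_def orthogonal_def by (auto intro: orth)
    show "0 \<notin> w ` {..<k}"
    proof
      assume "0 \<in> w ` {..<k}"
      then obtain c where "c < k" "w c = 0" by auto
      thus False using wnz[of c] by simp
    qed
  qed
  have sub: "w ` {..<k} \<subseteq> V" using wker KV by auto
  have "card (w ` {..<k}) \<le> dim V" by (rule independent_card_le_dim[OF sub ind])
  thus ?thesis using card_image[OF inj] by simp
qed



theorem mainTheorem5:
  fixes A0 :: "((real, 'n::{finite,linorder}) vec, 'n) vec"
    and A :: "'m::{finite,linorder} \<Rightarrow> ((real, 'n) vec, 'n) vec"
    and mI :: nat
    and F :: "(real, 'm) vec set"
  assumes "mI \<le> CARD('m)"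
    and "sym_mat A0"
    and "\<And>i. sym_mat (A i)"
    and "semidef_face mI A0 A F"
  shows "dim (Vspace A0 A F) \<ge> qe_mult A0 A"
proof -
  define K where "K \<gamma> = {v. Amat A0 A \<gamma> *v v = 0}" for \<gamma>
  have subK: "subspace (K \<gamma>)" for \<gamma>
    unfolding K_def subspace_def by (simp add: matrix_vector_right_distrib matrix_vector_mult_scaleR)
  have face: "F face_of Gamma_set mI A0 A" and Fne: "F \<noteq> {}" and npd: "\<And>\<gamma>. \<gamma> \<in> F \<Longrightarrow> \<not> pd (Amat A0 A \<gamma>)"
    using assms(4) unfolding semidef_face_def by auto
  have psdF: "psd (Amat A0 A \<gamma>)" if "\<gamma> \<in> F" for \<gamma>
    using face_of_imp_subset[OF face] that unfolding Gamma_set_def by auto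
  have cvx: "convex F" using face_of_imp_convex[OF face] .
  have symM: "sym_mat (Amat A0 A \<gamma>)" for \<gamma> using Amat_sym assms(2,3) by blast
  define d where "d = (LEAST d. \<exists>\<gamma>\<in>F. dim (K \<gamma>) = d)"
  have "\<exists>\<gamma>\<in>F. dim (K \<gamma>) = d" unfolding d_def
    by (rule LeastI_ex) (use Fne in blast)
  then obtain g where g: "g \<in> F" "dim (K g) = d" by blast
  have gmin: "d \<le> dim (K \<gamma>)" if "\<gamma> \<in> F" for \<gamma>
    unfolding d_def using that by (intro Least_le) blast
  have Kg_sub: "K g \<subseteq> K \<gamma>" if \<gamma>: "\<gamma> \<in> F" for \<gamma>
  proof -
    define m where "m = (1/2) *\<^sub>R g + (1/2) *\<^sub>R \<gamma>"
    have mF: "m \<in> F" unfolding m_def by (rule convexD[OF cvx g(1) \<gamma>]) auto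
    have Km: "K m \<subseteq> K g \<inter> K \<gamma>"
    proof
      fix v assume "v \<in> K m"
      hence "v \<bullet> (Amat A0 A m *v v) = 0" by (simp add: K_def)
      hence e: "(1/2) * (v \<bullet> (Amat A0 A g *v v)) + (1/2) * (v \<bullet> (Amat A0 A \<gamma> *v v)) = 0"
        by (simp add: m_def Amat_mid matrix_vector_mult_add_rdistrib scaleR_matrix_vector_assoc[symmetric] inner_add_right)
      have a: "v \<bullet> (Amat A0 A g *v v) \<ge> 0" using psdF[OF g(1)] by (simp add: psd_def)
      have b: "v \<bullet> (Amat A0 A \<gamma> *v v) \<ge> 0" using psdF[OF \<gamma>] by (simp add: psd_def)
      have "v \<bullet> (Amat A0 A g *v v) = 0" "v \<bullet> (Amat A0 A \<gamma> *v v) = 0" using e a b by linarith+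
      thus "v \<in> K g \<inter> K \<gamma>" using psd_ker[OF symM psdF[OF g(1)]] psd_ker[OF symM psdF[OF \<gamma>]]
        by (simp add: K_def)
    qed
    have "K m = K g"
      by (rule subspace_dim_equal[OF subK subK]) (use Km gmin[OF mF] g(2) in auto)
    thus ?thesis using Km by auto
  qed
  have KV: "K g \<subseteq> Vspace A0 A F"
    unfolding Vspace_def using Kg_sub by (auto simp: K_def)
  obtain x where x0: "x \<noteq> 0" and xle: "\<not> x \<bullet> (Amat A0 A g *v x) > 0"
    using npd[OF g(1)] unfolding pd_def by blast
  have "x \<bullet> (Amat A0 A g *v x) = 0" using xle psdF[OF g(1)] unfolding psd_def by (meson antisym not_le)
  hence Mx: "Amat A0 A g *v x = 0" by (rule psd_ker[OF symM psdF[OF g(1)]])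
  let ?k = "qe_mult A0 A"
  have kp: "is_kron_id ?k A0" "\<forall>i. is_kron_id ?k (A i)" using qe_prop[of A0 A] assms(2,3) by auto
  obtain B where B: "\<forall>i j. Amat A0 A g $ i $ j =
    (if idx i div (CARD('n) div ?k) = idx j div (CARD('n) div ?k) then B (idx i mod (CARD('n) div ?k)) (idx j mod (CARD('n) div ?k)) else (0::real))"
    using Amat_block[OF kp, of g] by blast
  have k: "0 < ?k" "?k dvd CARD('n)" using kp(1) unfolding is_kron_id_def by auto
  show ?thesis
    by (rule block_kernel[OF k B Mx x0]) (use KV in \<open>auto simp: K_def\<close>)
qed


end
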